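(* Let $S$ be the set of $27$ sextactic points of the Fermat cubic $F$ (see context), and let $\mathcal{L}$ be the set of lines in $\mathbb{P}^2_{\mathbb{C}}$ containing at least three points of $S$. These are exactly the lines occurring as components of reducible conics that contain six points of $S$. Then: <ul> <li>$|\mathcal{L}|=81$;</li> <li>each line of $\mathcal{L}$ contains exactly $3$ points of $S$;</li> <li>each point of $S$ lies on exactly $9$ lines of $\mathcal{L}$.</li> </ul> That is, $(\mathcal{L},S)$ is an $(81_3,27_9)$ configuration.
   Context: $F\subset\mathbb{P}^2_{\mathbb{C}}$ is the Fermat cubic $x^3+y^3+z^3=0$. The set of its sextactic points is $$S=\{[x:y:z]\in\mathbb{P}^2: x^3+y^3+z^3=0,\ (x^3-y^3)(y^3-z^3)(z^3-x^3)=0\}.$$ These are the $27$ points of $F$ at which the osculating conic has local contact order at least $6$ with $F$. *)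

theory Defs
  imports Complex_Main
begin

text \<open>Homogeneous coordinates: nonzero vectors in C^3. A point of the complex
projective plane is represented by the set of all scalar multiples of a nonzero
vector (the corresponding line through the origin in C^3).\<close>

type_synonym cvec = "complex \<times> complex \<times> complex"

definition ray :: "cvec \<Rightarrow> cvec set" where
  "ray v = (case v of (x, y, z) \<Rightarrow> {(c * x, c * y, c * z) | c. True})"

definition P2 :: "cvec set set" where
  "P2 = {ray v | v. v \<noteq> (0, 0, 0)}"

definition pline :: "cvec \<Rightarrow> cvec set set" where
  "pline l = (case l of (a, b, c) \<Rightarrow>
     {ray (x, y, z) | x y z. (x, y, z) \<noteq> (0, 0, 0) \<and> a * x + b * y + c * z = 0})"

definition plines :: "cvec set set set" where
  "plines = {pline l | l. l \<noteq> (0, 0, 0)}"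

definition sextactic_pts :: "cvec set set" where
  "sextactic_pts = {ray (x, y, z) | x y z. (x, y, z) \<noteq> (0, 0, 0) \<and>
      x ^ 3 + y ^ 3 + z ^ 3 = 0 \<and> (x ^ 3 - y ^ 3) * (y ^ 3 - z ^ 3) * (z ^ 3 - x ^ 3) = 0}"

definition rich_lines :: "cvec set set set" where
  "rich_lines = {L \<in> plines. card (L \<inter> sextactic_pts) \<ge> 3}"

end

theory Submission
  imports Defs
begin


lemma cubic_desc:
  fixes p q r :: int
  shows "p^3 + 2*q^3 + 4*r^3 = 6*p*q*r \<Longrightarrow> p = 0 \<and> q = 0 \<and> r = 0"
proof (induction "nat (\<bar>p\<bar> + \<bar>q\<bar> + \<bar>r\<bar>)" arbitrary: p q r rule: less_induct)
  case less
  have "p^3 = 2*(3*p*q*r - q^3 - 2*r^3)" using less.prems by algebra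
  hence "even (p^3)" by simp
  hence "even p" by simp
  then obtain p1 where p1: "p = 2*p1" by (auto elim: evenE)
  have e2: "q^3 + 2*r^3 + 4*p1^3 = 6*q*r*p1" using less.prems unfolding p1 by algebra
  have "q^3 = 2*(3*q*r*p1 - r^3 - 2*p1^3)" using e2 by algebra
  hence "even (q^3)" by simp
  hence "even q" by simp
  then obtain q1 where q1: "q = 2*q1" by (auto elim: evenE)
  have e3: "r^3 + 2*p1^3 + 4*q1^3 = 6*r*p1*q1" using e2 unfolding q1 by algebra
  have "r^3 = 2*(3*r*p1*q1 - p1^3 - 2*q1^3)" using e3 by algebra
  hence "even (r^3)" by simp
  hence "even r" by simp
  then obtain r1 where r1: "r = 2*r1" by (auto elim: evenE)
  have e4: "p1^3 + 2*q1^3 + 4*r1^3 = 6*p1*q1*r1" using e3 unfolding r1 by algebra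
  show ?case
  proof (rule ccontr)
    assume "\<not> (p = 0 \<and> q = 0 \<and> r = 0)"
    hence lt: "nat (\<bar>p1\<bar> + \<bar>q1\<bar> + \<bar>r1\<bar>) < nat (\<bar>p\<bar> + \<bar>q\<bar> + \<bar>r\<bar>)"
      unfolding p1 q1 r1 by auto
    from less.hyps[OF lt e4] have "p1 = 0 \<and> q1 = 0 \<and> r1 = 0" .
    with \<open>\<not> (p = 0 \<and> q = 0 \<and> r = 0)\<close> show False using p1 q1 r1 by simp
  qed
qed

definition rr :: real where "rr = root 3 2"
lemma rr3: "rr^3 = 2" unfolding rr_def by (simp add: real_root_pow_pos2)

lemma rr_indep:
  fixes p q s :: int
  assumes "real_of_int p + of_int q * rr + of_int s * rr^2 = 0"
  shows "p = 0 \<and> q = 0 \<and> s = 0"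
proof -
  define P where "P = real_of_int p" define Q where "Q = real_of_int q" define R where "R = real_of_int s"
  have h: "P + Q*rr + R*rr^2 = 0" using assms P_def Q_def R_def by simp
  have "(P + Q*rr + R*rr^2) * (P^2 - 2*Q*R + (2*R^2 - P*Q)*rr + (Q^2 - P*R)*rr^2)
     = P^3 + 2*Q^3 + 4*R^3 - 6*P*Q*R + (rr^3 - 2)*((Q^3+2*R^3-2*P*Q*R) + rr*(R*Q^2 - P*R^2))"
    by algebra
  hence "P^3 + 2*Q^3 + 4*R^3 - 6*P*Q*R = (P + Q*rr + R*rr^2) * (P^2 - 2*Q*R + (2*R^2 - P*Q)*rr + (Q^2 - P*R)*rr^2)"
    by (simp add: rr3)
  also have "\<dots> = 0" using h by simp
  finally have "real_of_int (p^3 + 2*q^3 + 4*s^3) = real_of_int (6*p*q*s)"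
    unfolding P_def Q_def R_def by simp
  hence "p^3 + 2*q^3 + 4*s^3 = 6*p*q*s" by (simp only: of_int_eq_iff)
  thus ?thesis by (rule cubic_desc)
qed

definition om :: complex where "om = Complex (-1/2) (sqrt 3 / 2)"
lemma om2: "om^2 + om + 1 = 0"
  unfolding om_def by (simp add: power2_eq_square complex_eq_iff)
lemma om3: "om^3 = 1"
proof -
  have "om^3 - 1 = (om - 1) * (om^2 + om + 1)" by algebra
  thus ?thesis using om2 by simp
qed
lemma om_nz: "om \<noteq> 0" using om3 by auto
lemma Im_om: "Im om = sqrt 3 / 2" unfolding om_def by simp

lemma om_indep:
  fixes a b :: real
  assumes "complex_of_real a + om * complex_of_real b = 0"
  shows "a = 0 \<and> b = 0"
proof -
  have "Im (complex_of_real a + om * complex_of_real b) = sqrt 3 / 2 * b"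
    by (simp add: Im_om)
  hence "b = 0" using assms by simp
  thus ?thesis using assms by simp
qed

lemma cube_root_unity:
  fixes w :: complex assumes "w^3 = 1" shows "w = 1 \<or> w = om \<or> w = om^2"
proof -
  have "(w - 1) * (w - om) * (w - om^2) = w^3 - (om^2+om+1)*w^2 + (om^2 + om + 1)*om*w - om^3"
    by algebra
  also have "\<dots> = 0" using assms om2 om3 by simp
  finally show ?thesis by auto
qed

datatype z3 = Z0 | Z1 | Z2
datatype cp = C0 | C1 | C2
fun add3 :: "z3 \<Rightarrow> z3 \<Rightarrow> z3" where
 "add3 Z0 e = e" | "add3 Z1 Z0 = Z1" | "add3 Z2 Z0 = Z2" | "add3 Z1 Z1 = Z2" | "add3 Z1 Z2 = Z0" | "add3 Z2 Z1 = Z0" | "add3 Z2 Z2 = Z1"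
fun addc :: "cp \<Rightarrow> cp \<Rightarrow> int \<times> cp" where
 "addc C0 j = (1, j)" | "addc C1 C0 = (1, C1)" | "addc C2 C0 = (1, C2)" | "addc C1 C1 = (1, C2)" | "addc C1 C2 = (2, C0)"
| "addc C2 C1 = (2, C0)" | "addc C2 C2 = (2, C1)"
type_synonym mono = "int \<times> z3 \<times> cp"
type_synonym sym = "mono list"
type_synonym svec = "sym \<times> sym \<times> sym"
fun mmul :: "mono \<Rightarrow> mono \<Rightarrow> mono" where
 "mmul (k,e,j) (k',e',j') = (case addc j j' of (m, j'') \<Rightarrow> (m*k*k', add3 e e', j''))"
fun smul :: "sym \<Rightarrow> sym \<Rightarrow> sym" where
 "smul [] ys = []" | "smul (x#xs) ys = map (mmul x) ys @ smul xs ys"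
fun mneg :: "mono \<Rightarrow> mono" where "mneg (k,e,j) = (-k,e,j)"
definition scross :: "svec \<Rightarrow> svec \<Rightarrow> svec" where
 "scross u v = (case u of (a,b,c) \<Rightarrow> case v of (d,e,f) \<Rightarrow>
    (smul b f @ map mneg (smul c e), smul c d @ map mneg (smul a f), smul a e @ map mneg (smul b d)))"
definition sdot :: "svec \<Rightarrow> svec \<Rightarrow> sym" where
 "sdot u v = (case u of (a,b,c) \<Rightarrow> case v of (d,e,f) \<Rightarrow> smul a d @ smul b e @ smul c f)"
type_synonym t3 = "int \<times> int \<times> int"
fun upd3 :: "int \<Rightarrow> z3 \<Rightarrow> t3 \<Rightarrow> t3" where
 "upd3 k Z0 (a,b,c) = (a+k,b,c)" | "upd3 k Z1 (a,b,c) = (a,b+k,c)" | "upd3 k Z2 (a,b,c) = (a,b,c+k)"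
fun upd9 :: "mono \<Rightarrow> t3 \<times> t3 \<times> t3 \<Rightarrow> t3 \<times> t3 \<times> t3" where
 "upd9 (k,e,C0) (x,y,z) = (upd3 k e x, y, z)"
|"upd9 (k,e,C1) (x,y,z) = (x, upd3 k e y, z)"
|"upd9 (k,e,C2) (x,y,z) = (x, y, upd3 k e z)"
fun z3ok :: "t3 \<Rightarrow> bool" where "z3ok (a,b,c) = (a = c \<and> b = c)"
definition iszero :: "sym \<Rightarrow> bool" where
 "iszero xs = (case fold upd9 xs ((0,0,0),(0,0,0),(0,0,0)) of (x,y,z) \<Rightarrow> z3ok x \<and> z3ok y \<and> z3ok z)"

definition cc :: complex where "cc = complex_of_real rr"
lemma cc3: "cc^3 = 2" unfolding cc_def by (metis of_real_numeral of_real_power rr3)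
lemma cc_m[simp]: "cc * cc = cc^2" "cc * cc^2 = 2" "cc^2 * cc = 2" "cc^2 * cc^2 = 2 * cc"
proof -
  show "cc * cc = cc^2" by algebra
  have "cc * cc^2 = cc^3" "cc^2 * cc = cc^3" "cc^2*cc^2 = cc^3 * cc" by algebra+
  thus "cc * cc^2 = 2" "cc^2 * cc = 2" "cc^2 * cc^2 = 2 * cc" using cc3 by simp_all
qed
lemma om_m[simp]: "om * om = om^2" "om * om^2 = 1" "om^2 * om = 1" "om^2 * om^2 = om"
proof -
  show "om * om = om^2" by algebra
  have "om * om^2 = om^3" "om^2 * om = om^3" "om^2*om^2 = om^3 * om" by algebra+
  thus "om * om^2 = 1" "om^2 * om = 1" "om^2 * om^2 = om" using om3 by simp_all
qed
lemma om4[simp]: "om^4 = om" proof - have "om^4 = om^3*om" by algebra thus ?thesis using om3 by simp qed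
lemma cc4[simp]: "cc^4 = 2*cc" proof - have "cc^4 = cc^3*cc" by algebra thus ?thesis using cc3 by simp qed

fun evz :: "z3 \<Rightarrow> complex" where "evz Z0 = 1" | "evz Z1 = om" | "evz Z2 = om^2"
fun evc :: "cp \<Rightarrow> complex" where "evc C0 = 1" | "evc C1 = cc" | "evc C2 = cc^2"
fun evm :: "mono \<Rightarrow> complex" where "evm (k,e,j) = of_int k * evz e * evc j"
definition evs :: "sym \<Rightarrow> complex" where "evs xs = sum_list (map evm xs)"
fun evv :: "svec \<Rightarrow> complex \<times> complex \<times> complex" where "evv (a,b,c) = (evs a, evs b, evs c)"

lemma evz_add: "evz (add3 e e') = evz e * evz e'"
  by (cases e; cases e'; simp)
lemma evc_add: "addc j j' = (m, j'') \<Longrightarrow> of_int m * evc j'' = evc j * evc j'"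
  by (cases j; cases j'; auto)
lemma evm_mul: "evm (mmul x y) = evm x * evm y"
proof -
  obtain k e j where x: "x = (k,e,j)" by (cases x) auto
  obtain k' e' j' where y: "y = (k',e',j')" by (cases y) auto
  obtain m j'' where a: "addc j j' = (m, j'')" by fastforce
  have "of_int m * evc j'' = evc j * evc j'" by (rule evc_add[OF a])
  thus ?thesis using a unfolding x y by (simp add: evz_add algebra_simps)
qed
lemma evs_Nil[simp]: "evs [] = 0" by (simp add: evs_def)
lemma evs_Cons[simp]: "evs (x#xs) = evm x + evs xs" by (simp add: evs_def)
lemma evs_append[simp]: "evs (xs @ ys) = evs xs + evs ys" by (simp add: evs_def)
lemma evs_map_mul: "evs (map (mmul x) ys) = evm x * evs ys"
  by (induction ys) (simp_all add: evm_mul algebra_simps)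
lemma evs_smul[simp]: "evs (smul xs ys) = evs xs * evs ys"
  by (induction xs) (simp_all add: evs_map_mul algebra_simps)
lemma evs_neg[simp]: "evs (map mneg xs) = - evs xs"
proof (induction xs)
  case (Cons x xs) thus ?case by (cases x) simp
qed simp

definition cdot :: "complex \<times> complex \<times> complex \<Rightarrow> complex \<times> complex \<times> complex \<Rightarrow> complex" where
  "cdot u v = (case u of (a,b,c) \<Rightarrow> case v of (x,y,z) \<Rightarrow> a*x + b*y + c*z)"
definition ccross :: "complex \<times> complex \<times> complex \<Rightarrow> complex \<times> complex \<times> complex \<Rightarrow> complex \<times> complex \<times> complex" where
  "ccross u v = (case u of (a,b,c) \<Rightarrow> case v of (d,e,f) \<Rightarrow> (b*f - c*e, c*d - a*f, a*e - b*d))"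

lemma evv_scross: "evv (scross u v) = ccross (evv u) (evv v)"
  by (cases u; cases v) (auto simp: scross_def ccross_def)
lemma evs_sdot: "evs (sdot u v) = cdot (evv u) (evv v)"
  by (cases u; cases v) (auto simp: sdot_def cdot_def)

fun ev3 :: "t3 \<Rightarrow> complex" where "ev3 (a,b,c) = of_int a + of_int b * om + of_int c * om^2"
fun ev9 :: "t3 \<times> t3 \<times> t3 \<Rightarrow> complex" where "ev9 (x,y,z) = ev3 x + cc * ev3 y + cc^2 * ev3 z"
lemma ev3_upd: "ev3 (upd3 k e x) = ev3 x + of_int k * evz e"
  by (cases x; cases e) (auto simp: algebra_simps)
lemma ev9_upd: "ev9 (upd9 m N) = ev9 N + evm m"
proof -
  obtain k e j where m: "m = (k,e,j)" by (cases m) auto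
  obtain x y z where N: "N = (x,y,z)" by (cases N) auto
  show ?thesis unfolding m N by (cases j) (auto simp: ev3_upd algebra_simps)
qed
lemma ev9_fold: "ev9 (fold upd9 xs N) = ev9 N + evs xs"
  by (induction xs arbitrary: N) (auto simp: ev9_upd algebra_simps)

lemma ev3_alt: "ev3 (a,b,c) = of_int (a - c) + of_int (b - c) * om"
proof -
  have "ev3 (a,b,c) = of_int (a - c) + of_int (b - c) * om + of_int c * (om^2 + om + 1)"
    by (simp add: algebra_simps)
  thus ?thesis using om2 by simp
qed

lemma ev9_zero: "ev9 ((a0,a1,a2),(b0,b1,b2),(c0,c1,c2)) = 0 \<longleftrightarrow> z3ok (a0,a1,a2) \<and> z3ok (b0,b1,b2) \<and> z3ok (c0,c1,c2)"
proof
  assume h: "ev9 ((a0,a1,a2),(b0,b1,b2),(c0,c1,c2)) = 0"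
  define X where "X = real_of_int (a0 - a2) + of_int (b0 - b2) * rr + of_int (c0 - c2) * rr^2"
  define Y where "Y = real_of_int (a1 - a2) + of_int (b1 - b2) * rr + of_int (c1 - c2) * rr^2"
  have "ev9 ((a0,a1,a2),(b0,b1,b2),(c0,c1,c2)) = complex_of_real X + om * complex_of_real Y"
    unfolding X_def Y_def ev9.simps ev3_alt by (simp add: cc_def algebra_simps)
  with h have "X = 0 \<and> Y = 0" using om_indep by simp
  hence "a0 - a2 = 0 \<and> b0 - b2 = 0 \<and> c0 - c2 = 0" "a1 - a2 = 0 \<and> b1 - b2 = 0 \<and> c1 - c2 = 0"
    unfolding X_def Y_def using rr_indep by blast+
  thus "z3ok (a0,a1,a2) \<and> z3ok (b0,b1,b2) \<and> z3ok (c0,c1,c2)" by simp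
next
  assume "z3ok (a0,a1,a2) \<and> z3ok (b0,b1,b2) \<and> z3ok (c0,c1,c2)"
  moreover have "\<And>a. ev3 (a,a,a) = 0" by (simp only: ev3_alt) simp
  ultimately show "ev9 ((a0,a1,a2),(b0,b1,b2),(c0,c1,c2)) = 0" by simp
qed

lemma iszero_iff: "iszero xs \<longleftrightarrow> evs xs = 0"
proof -
  have "evs xs = ev9 (fold upd9 xs ((0,0,0),(0,0,0),(0,0,0)))" by (simp add: ev9_fold)
  moreover obtain a0 a1 a2 b0 b1 b2 c0 c1 c2 where
    "fold upd9 xs ((0,0,0),(0,0,0),(0,0,0)) = ((a0,a1,a2),(b0,b1,b2),(c0,c1,c2))"
    by (metis prod_cases3)
  ultimately show ?thesis unfolding iszero_def using ev9_zero by simp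
qed

type_synonym idx = "z3 \<times> z3 \<times> z3"
fun pt :: "idx \<Rightarrow> svec" where
  "pt (Z0,a,b) = ([(1,Z0,C0)], [(1,a,C0)], [(-1,b,C1)])"
| "pt (Z1,a,b) = ([(-1,b,C1)], [(1,Z0,C0)], [(1,a,C0)])"
| "pt (Z2,a,b) = ([(1,a,C0)], [(-1,b,C1)], [(1,Z0,C0)])"
definition allidx :: "idx list" where "allidx = [(Z0,Z0,Z0), (Z0,Z0,Z1), (Z0,Z0,Z2), (Z0,Z1,Z0), (Z0,Z1,Z1), (Z0,Z1,Z2), (Z0,Z2,Z0), (Z0,Z2,Z1), (Z0,Z2,Z2), (Z1,Z0,Z0), (Z1,Z0,Z1), (Z1,Z0,Z2), (Z1,Z1,Z0), (Z1,Z1,Z1), (Z1,Z1,Z2), (Z1,Z2,Z0), (Z1,Z2,Z1), (Z1,Z2,Z2), (Z2,Z0,Z0), (Z2,Z0,Z1), (Z2,Z0,Z2), (Z2,Z1,Z0), (Z2,Z1,Z1), (Z2,Z1,Z2), (Z2,Z2,Z0), (Z2,Z2,Z1), (Z2,Z2,Z2)]"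
definition TL :: "idx list list" where "TL = [[(Z0,Z0,Z0),(Z0,Z0,Z1),(Z0,Z0,Z2)], [(Z0,Z0,Z0),(Z0,Z1,Z0),(Z0,Z2,Z0)], [(Z0,Z0,Z0),(Z0,Z1,Z1),(Z0,Z2,Z2)], [(Z0,Z0,Z0),(Z1,Z0,Z1),(Z2,Z0,Z2)], [(Z0,Z0,Z0),(Z1,Z0,Z2),(Z2,Z0,Z1)], [(Z0,Z0,Z0),(Z1,Z1,Z0),(Z2,Z2,Z0)], [(Z0,Z0,Z0),(Z1,Z1,Z1),(Z2,Z2,Z2)], [(Z0,Z0,Z0),(Z1,Z2,Z0),(Z2,Z1,Z0)], [(Z0,Z0,Z0),(Z1,Z2,Z2),(Z2,Z1,Z1)], [(Z0,Z0,Z1),(Z0,Z1,Z1),(Z0,Z2,Z1)], [(Z0,Z0,Z1),(Z0,Z1,Z2),(Z0,Z2,Z0)], [(Z0,Z0,Z1),(Z1,Z0,Z0),(Z2,Z0,Z2)], [(Z0,Z0,Z1),(Z1,Z0,Z2),(Z2,Z0,Z0)], [(Z0,Z0,Z1),(Z1,Z1,Z1),(Z2,Z2,Z1)], [(Z0,Z0,Z1),(Z1,Z1,Z2),(Z2,Z2,Z0)], [(Z0,Z0,Z1),(Z1,Z2,Z0),(Z2,Z1,Z2)], [(Z0,Z0,Z1),(Z1,Z2,Z1),(Z2,Z1,Z1)], [(Z0,Z0,Z2),(Z0,Z1,Z0),(Z0,Z2,Z1)], [(Z0,Z0,Z2),(Z0,Z1,Z2),(Z0,Z2,Z2)], [(Z0,Z0,Z2),(Z1,Z0,Z0),(Z2,Z0,Z1)],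 [(Z0,Z0,Z2),(Z1,Z0,Z1),(Z2,Z0,Z0)], [(Z0,Z0,Z2),(Z1,Z1,Z0),(Z2,Z2,Z1)], [(Z0,Z0,Z2),(Z1,Z1,Z2),(Z2,Z2,Z2)], [(Z0,Z0,Z2),(Z1,Z2,Z1),(Z2,Z1,Z0)], [(Z0,Z0,Z2),(Z1,Z2,Z2),(Z2,Z1,Z2)], [(Z0,Z1,Z0),(Z0,Z1,Z1),(Z0,Z1,Z2)], [(Z0,Z1,Z0),(Z1,Z0,Z0),(Z2,Z2,Z0)], [(Z0,Z1,Z0),(Z1,Z0,Z2),(Z2,Z2,Z1)], [(Z0,Z1,Z0),(Z1,Z1,Z1),(Z2,Z1,Z2)], [(Z0,Z1,Z0),(Z1,Z1,Z2),(Z2,Z1,Z1)], [(Z0,Z1,Z0),(Z1,Z2,Z0),(Z2,Z0,Z0)], [(Z0,Z1,Z0),(Z1,Z2,Z1),(Z2,Z0,Z2)], [(Z0,Z1,Z1),(Z1,Z0,Z0),(Z2,Z2,Z2)], [(Z0,Z1,Z1),(Z1,Z0,Z1),(Z2,Z2,Z1)], [(Z0,Z1,Z1),(Z1,Z1,Z0),(Z2,Z1,Z2)], [(Z0,Z1,Z1),(Z1,Z1,Z2),(Z2,Z1,Z0)], [(Z0,Z1,Z1),(Z1,Z2,Z1),(Z2,Z0,Z1)], [(Z0,Z1,Z1),(Z1,Z2,Z2),(Z2,Z0,Z0)], [(Z0,Z1,Z2),(Z1,Z0,Z1),(Z2,Z2,Z0)], [(Z0,Z1,Z2),(Z1,Z0,Z2),(Z2,Z2,Z2)],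 [(Z0,Z1,Z2),(Z1,Z1,Z0),(Z2,Z1,Z1)], [(Z0,Z1,Z2),(Z1,Z1,Z1),(Z2,Z1,Z0)], [(Z0,Z1,Z2),(Z1,Z2,Z0),(Z2,Z0,Z1)], [(Z0,Z1,Z2),(Z1,Z2,Z2),(Z2,Z0,Z2)], [(Z0,Z2,Z0),(Z0,Z2,Z1),(Z0,Z2,Z2)], [(Z0,Z2,Z0),(Z1,Z0,Z0),(Z2,Z1,Z0)], [(Z0,Z2,Z0),(Z1,Z0,Z1),(Z2,Z1,Z2)], [(Z0,Z2,Z0),(Z1,Z1,Z0),(Z2,Z0,Z0)], [(Z0,Z2,Z0),(Z1,Z1,Z2),(Z2,Z0,Z1)], [(Z0,Z2,Z0),(Z1,Z2,Z1),(Z2,Z2,Z2)], [(Z0,Z2,Z0),(Z1,Z2,Z2),(Z2,Z2,Z1)], [(Z0,Z2,Z1),(Z1,Z0,Z1),(Z2,Z1,Z1)], [(Z0,Z2,Z1),(Z1,Z0,Z2),(Z2,Z1,Z0)], [(Z0,Z2,Z1),(Z1,Z1,Z0),(Z2,Z0,Z2)], [(Z0,Z2,Z1),(Z1,Z1,Z1),(Z2,Z0,Z1)], [(Z0,Z2,Z1),(Z1,Z2,Z0),(Z2,Z2,Z2)], [(Z0,Z2,Z1),(Z1,Z2,Z2),(Z2,Z2,Z0)], [(Z0,Z2,Z2),(Z1,Z0,Z0),(Z2,Z1,Z1)], [(Z0,Z2,Z2),(Z1,Z0,Z2),(Z2,Z1,Z2)], [(Z0,Z2,Z2),(Z1,Z1,Z1),(Z2,Z0,Z0)],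 [(Z0,Z2,Z2),(Z1,Z1,Z2),(Z2,Z0,Z2)], [(Z0,Z2,Z2),(Z1,Z2,Z0),(Z2,Z2,Z1)], [(Z0,Z2,Z2),(Z1,Z2,Z1),(Z2,Z2,Z0)], [(Z1,Z0,Z0),(Z1,Z0,Z1),(Z1,Z0,Z2)], [(Z1,Z0,Z0),(Z1,Z1,Z0),(Z1,Z2,Z0)], [(Z1,Z0,Z0),(Z1,Z1,Z1),(Z1,Z2,Z2)], [(Z1,Z0,Z1),(Z1,Z1,Z1),(Z1,Z2,Z1)], [(Z1,Z0,Z1),(Z1,Z1,Z2),(Z1,Z2,Z0)], [(Z1,Z0,Z2),(Z1,Z1,Z0),(Z1,Z2,Z1)], [(Z1,Z0,Z2),(Z1,Z1,Z2),(Z1,Z2,Z2)], [(Z1,Z1,Z0),(Z1,Z1,Z1),(Z1,Z1,Z2)], [(Z1,Z2,Z0),(Z1,Z2,Z1),(Z1,Z2,Z2)], [(Z2,Z0,Z0),(Z2,Z0,Z1),(Z2,Z0,Z2)], [(Z2,Z0,Z0),(Z2,Z1,Z0),(Z2,Z2,Z0)], [(Z2,Z0,Z0),(Z2,Z1,Z1),(Z2,Z2,Z2)], [(Z2,Z0,Z1),(Z2,Z1,Z1),(Z2,Z2,Z1)], [(Z2,Z0,Z1),(Z2,Z1,Z2),(Z2,Z2,Z0)], [(Z2,Z0,Z2),(Z2,Z1,Z0),(Z2,Z2,Z1)], [(Z2,Z0,Z2),(Z2,Z1,Z2),(Z2,Z2,Z2)], [(Z2,Z1,Z0),(Z2,Z1,Z1),(Z2,Z1,Z2)],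 [(Z2,Z2,Z0),(Z2,Z2,Z1),(Z2,Z2,Z2)]]"
definition PL :: "nat list" where "PL = [25, 9, 10, 9, 9, 9, 9, 9, 9, 1, 2, 1, 1, 1, 1, 1, 1, 2, 1, 1, 1, 1, 1, 1, 1, 0, 0, 0, 0, 0, 0, 0, 0, 0, 0, 0, 0, 0, 0, 0, 0, 0, 0, 0, 0, 0, 0, 0, 0, 0, 0, 0, 0, 0, 0, 0, 0, 0, 0, 0, 0, 0, 0, 0, 0, 0, 0, 0, 0, 0, 0, 0, 0, 0, 0, 0, 0, 0, 0, 0, 0]"
definition tmask :: "idx list \<Rightarrow> bool list" where "tmask zs = map (\<lambda>k. k \<in> set zs) allidx"
definition TLM :: "bool list list" where "TLM = [[True,True,True,False,False,False,False,False,False,False,False,False,False,False,False,False,False,False,False,False,False,False,False,False,False,False,False], [True,False,False,True,False,False,True,False,False,False,False,False,False,False,False,False,False,False,False,False,False,False,False,False,False,False,False], [True,False,False,False,True,False,False,False,True,False,False,False,False,False,False,False,False,False,False,False,False,False,False,False,False,False,False], [True,False,False,False,False,False,False,False,False,False,True,False,False,False,False,False,False,False,False,False,True,False,False,False,False,False,False], [True,False,False,False,False,False,False,False,False,False,False,True,False,False,False,False,False,False,False,True,False,False,False,False,False,False,False], [True,False,False,False,False,False,False,False,False,False,False,False,True,False,False,False,False,False,False,False,False,False,False,False,True,False,False], [True,False,False,False,False,False,False,False,False,False,False,False,False,True,False,False,False,False,False,False,False,False,False,False,False,False,True], [True,False,False,False,False,False,False,False,False,False,False,False,False,False,False,True,False,False,False,False,False,True,False,False,False,False,False],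 [True,False,False,False,False,False,False,False,False,False,False,False,False,False,False,False,False,True,False,False,False,False,True,False,False,False,False], [False,True,False,False,True,False,False,True,False,False,False,False,False,False,False,False,False,False,False,False,False,False,False,False,False,False,False], [False,True,False,False,False,True,True,False,False,False,False,False,False,False,False,False,False,False,False,False,False,False,False,False,False,False,False], [False,True,False,False,False,False,False,False,False,True,False,False,False,False,False,False,False,False,False,False,True,False,False,False,False,False,False], [False,True,False,False,False,False,False,False,False,False,False,True,False,False,False,False,False,False,True,False,False,False,False,False,False,False,False], [False,True,False,False,False,False,False,False,False,False,False,False,False,True,False,False,False,False,False,False,False,False,False,False,False,True,False], [False,True,False,False,False,False,False,False,False,False,False,False,False,False,True,False,False,False,False,False,False,False,False,False,True,False,False], [False,True,False,False,False,False,False,False,False,False,False,False,False,False,False,True,False,False,False,False,False,False,False,True,False,False,False], [False,True,False,False,False,False,False,False,False,False,False,False,False,False,False,False,True,False,False,False,False,False,True,False,False,False,False], [False,False,True,True,False,False,False,True,False,False,False,False,False,False,False,False,False,False,False,False,False,False,False,False,False,False,False], [False,False,True,False,False,True,False,False,True,False,False,False,False,False,False,False,False,False,False,False,False,False,False,False,False,False,False], [False,False,True,False,False,False,False,False,False,True,False,False,False,False,False,False,False,False,False,True,False,False,False,False,False,False,False], [False,False,True,False,False,False,False,False,False,False,True,False,False,False,False,False,False,False,True,False,False,False,False,False,False,False,False], [False,False,True,False,False,False,False,False,False,False,False,False,True,False,False,False,False,False,False,False,False,False,False,False,False,True,False], [False,False,True,False,False,False,False,False,False,False,False,False,False,False,True,False,False,False,False,False,False,False,False,False,False,False,True],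 [False,False,True,False,False,False,False,False,False,False,False,False,False,False,False,False,True,False,False,False,False,True,False,False,False,False,False], [False,False,True,False,False,False,False,False,False,False,False,False,False,False,False,False,False,True,False,False,False,False,False,True,False,False,False], [False,False,False,True,True,True,False,False,False,False,False,False,False,False,False,False,False,False,False,False,False,False,False,False,False,False,False], [False,False,False,True,False,False,False,False,False,True,False,False,False,False,False,False,False,False,False,False,False,False,False,False,True,False,False], [False,False,False,True,False,False,False,False,False,False,False,True,False,False,False,False,False,False,False,False,False,False,False,False,False,True,False], [False,False,False,True,False,False,False,False,False,False,False,False,False,True,False,False,False,False,False,False,False,False,False,True,False,False,False], [False,False,False,True,False,False,False,False,False,False,False,False,False,False,True,False,False,False,False,False,False,False,True,False,False,False,False], [False,False,False,True,False,False,False,False,False,False,False,False,False,False,False,True,False,False,True,False,False,False,False,False,False,False,False], [False,False,False,True,False,False,False,False,False,False,False,False,False,False,False,False,True,False,False,False,True,False,False,False,False,False,False], [False,False,False,False,True,False,False,False,False,True,False,False,False,False,False,False,False,False,False,False,False,False,False,False,False,False,True], [False,False,False,False,True,False,False,False,False,False,True,False,False,False,False,False,False,False,False,False,False,False,False,False,False,True,False], [False,False,False,False,True,False,False,False,False,False,False,False,True,False,False,False,False,False,False,False,False,False,False,True,False,False,False], [False,False,False,False,True,False,False,False,False,False,False,False,False,False,True,False,False,False,False,False,False,True,False,False,False,False,False], [False,False,False,False,True,False,False,False,False,False,False,False,False,False,False,False,True,False,False,True,False,False,False,False,False,False,False], [False,False,False,False,True,False,False,False,False,False,False,False,False,False,False,False,False,True,True,False,False,False,False,False,False,False,False],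 [False,False,False,False,False,True,False,False,False,False,True,False,False,False,False,False,False,False,False,False,False,False,False,False,True,False,False], [False,False,False,False,False,True,False,False,False,False,False,True,False,False,False,False,False,False,False,False,False,False,False,False,False,False,True], [False,False,False,False,False,True,False,False,False,False,False,False,True,False,False,False,False,False,False,False,False,False,True,False,False,False,False], [False,False,False,False,False,True,False,False,False,False,False,False,False,True,False,False,False,False,False,False,False,True,False,False,False,False,False], [False,False,False,False,False,True,False,False,False,False,False,False,False,False,False,True,False,False,False,True,False,False,False,False,False,False,False], [False,False,False,False,False,True,False,False,False,False,False,False,False,False,False,False,False,True,False,False,True,False,False,False,False,False,False], [False,False,False,False,False,False,True,True,True,False,False,False,False,False,False,False,False,False,False,False,False,False,False,False,False,False,False], [False,False,False,False,False,False,True,False,False,True,False,False,False,False,False,False,False,False,False,False,False,True,False,False,False,False,False], [False,False,False,False,False,False,True,False,False,False,True,False,False,False,False,False,False,False,False,False,False,False,False,True,False,False,False], [False,False,False,False,False,False,True,False,False,False,False,False,True,False,False,False,False,False,True,False,False,False,False,False,False,False,False], [False,False,False,False,False,False,True,False,False,False,False,False,False,False,True,False,False,False,False,True,False,False,False,False,False,False,False], [False,False,False,False,False,False,True,False,False,False,False,False,False,False,False,False,True,False,False,False,False,False,False,False,False,False,True], [False,False,False,False,False,False,True,False,False,False,False,False,False,False,False,False,False,True,False,False,False,False,False,False,False,True,False], [False,False,False,False,False,False,False,True,False,False,True,False,False,False,False,False,False,False,False,False,False,False,True,False,False,False,False], [False,False,False,False,False,False,False,True,False,False,False,True,False,False,False,False,False,False,False,False,False,True,False,False,False,False,False],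 [False,False,False,False,False,False,False,True,False,False,False,False,True,False,False,False,False,False,False,False,True,False,False,False,False,False,False], [False,False,False,False,False,False,False,True,False,False,False,False,False,True,False,False,False,False,False,True,False,False,False,False,False,False,False], [False,False,False,False,False,False,False,True,False,False,False,False,False,False,False,True,False,False,False,False,False,False,False,False,False,False,True], [False,False,False,False,False,False,False,True,False,False,False,False,False,False,False,False,False,True,False,False,False,False,False,False,True,False,False], [False,False,False,False,False,False,False,False,True,True,False,False,False,False,False,False,False,False,False,False,False,False,True,False,False,False,False], [False,False,False,False,False,False,False,False,True,False,False,True,False,False,False,False,False,False,False,False,False,False,False,True,False,False,False], [False,False,False,False,False,False,False,False,True,False,False,False,False,True,False,False,False,False,True,False,False,False,False,False,False,False,False], [False,False,False,False,False,False,False,False,True,False,False,False,False,False,True,False,False,False,False,False,True,False,False,False,False,False,False], [False,False,False,False,False,False,False,False,True,False,False,False,False,False,False,True,False,False,False,False,False,False,False,False,False,True,False], [False,False,False,False,False,False,False,False,True,False,False,False,False,False,False,False,True,False,False,False,False,False,False,False,True,False,False], [False,False,False,False,False,False,False,False,False,True,True,True,False,False,False,False,False,False,False,False,False,False,False,False,False,False,False], [False,False,False,False,False,False,False,False,False,True,False,False,True,False,False,True,False,False,False,False,False,False,False,False,False,False,False], [False,False,False,False,False,False,False,False,False,True,False,False,False,True,False,False,False,True,False,False,False,False,False,False,False,False,False], [False,False,False,False,False,False,False,False,False,False,True,False,False,True,False,False,True,False,False,False,False,False,False,False,False,False,False], [False,False,False,False,False,False,False,False,False,False,True,False,False,False,True,True,False,False,False,False,False,False,False,False,False,False,False],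 [False,False,False,False,False,False,False,False,False,False,False,True,True,False,False,False,True,False,False,False,False,False,False,False,False,False,False], [False,False,False,False,False,False,False,False,False,False,False,True,False,False,True,False,False,True,False,False,False,False,False,False,False,False,False], [False,False,False,False,False,False,False,False,False,False,False,False,True,True,True,False,False,False,False,False,False,False,False,False,False,False,False], [False,False,False,False,False,False,False,False,False,False,False,False,False,False,False,True,True,True,False,False,False,False,False,False,False,False,False], [False,False,False,False,False,False,False,False,False,False,False,False,False,False,False,False,False,False,True,True,True,False,False,False,False,False,False], [False,False,False,False,False,False,False,False,False,False,False,False,False,False,False,False,False,False,True,False,False,True,False,False,True,False,False], [False,False,False,False,False,False,False,False,False,False,False,False,False,False,False,False,False,False,True,False,False,False,True,False,False,False,True], [False,False,False,False,False,False,False,False,False,False,False,False,False,False,False,False,False,False,False,True,False,False,True,False,False,True,False], [False,False,False,False,False,False,False,False,False,False,False,False,False,False,False,False,False,False,False,True,False,False,False,True,True,False,False], [False,False,False,False,False,False,False,False,False,False,False,False,False,False,False,False,False,False,False,False,True,True,False,False,False,True,False], [False,False,False,False,False,False,False,False,False,False,False,False,False,False,False,False,False,False,False,False,True,False,False,True,False,False,True], [False,False,False,False,False,False,False,False,False,False,False,False,False,False,False,False,False,False,False,False,False,True,True,True,False,False,False], [False,False,False,False,False,False,False,False,False,False,False,False,False,False,False,False,False,False,False,False,False,False,False,False,True,True,True]]"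
definition Zb :: "svec \<Rightarrow> bool list" where "Zb m = map (\<lambda>k. iszero (sdot m (pt k))) allidx"
definition pchk2 :: "bool list \<Rightarrow> idx \<Rightarrow> idx \<Rightarrow> bool" where
  "pchk2 e i j = (e = tmask [i,j] \<or> e \<in> set TLM)"
definition pchk :: "idx \<Rightarrow> idx \<Rightarrow> bool" where
  "pchk i j = pchk2 (Zb (scross (pt i) (pt j))) i j"
lemma chk_0: "list_all (pchk (allidx!0)) (drop (Suc 0) allidx)" by code_simp
lemma chk_1: "list_all (pchk (allidx!1)) (drop (Suc 1) allidx)" by code_simp
lemma chk_2: "list_all (pchk (allidx!2)) (drop (Suc 2) allidx)" by code_simp
lemma chk_3: "list_all (pchk (allidx!3)) (drop (Suc 3) allidx)" by code_simp
lemma chk_4: "list_all (pchk (allidx!4)) (drop (Suc 4) allidx)" by code_simp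
lemma chk_5: "list_all (pchk (allidx!5)) (drop (Suc 5) allidx)" by code_simp
lemma chk_6: "list_all (pchk (allidx!6)) (drop (Suc 6) allidx)" by code_simp
lemma chk_7: "list_all (pchk (allidx!7)) (drop (Suc 7) allidx)" by code_simp
lemma chk_8: "list_all (pchk (allidx!8)) (drop (Suc 8) allidx)" by code_simp
lemma chk_9: "list_all (pchk (allidx!9)) (drop (Suc 9) allidx)" by code_simp
lemma chk_10: "list_all (pchk (allidx!10)) (drop (Suc 10) allidx)" by code_simp
lemma chk_11: "list_all (pchk (allidx!11)) (drop (Suc 11) allidx)" by code_simp
lemma chk_12: "list_all (pchk (allidx!12)) (drop (Suc 12) allidx)" by code_simp
lemma chk_13: "list_all (pchk (allidx!13)) (drop (Suc 13) allidx)" by code_simp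
lemma chk_14: "list_all (pchk (allidx!14)) (drop (Suc 14) allidx)" by code_simp
lemma chk_15: "list_all (pchk (allidx!15)) (drop (Suc 15) allidx)" by code_simp
lemma chk_16: "list_all (pchk (allidx!16)) (drop (Suc 16) allidx)" by code_simp
lemma chk_17: "list_all (pchk (allidx!17)) (drop (Suc 17) allidx)" by code_simp
lemma chk_18: "list_all (pchk (allidx!18)) (drop (Suc 18) allidx)" by code_simp
lemma chk_19: "list_all (pchk (allidx!19)) (drop (Suc 19) allidx)" by code_simp
lemma chk_20: "list_all (pchk (allidx!20)) (drop (Suc 20) allidx)" by code_simp
lemma chk_21: "list_all (pchk (allidx!21)) (drop (Suc 21) allidx)" by code_simp
lemma chk_22: "list_all (pchk (allidx!22)) (drop (Suc 22) allidx)" by code_simp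
lemma chk_23: "list_all (pchk (allidx!23)) (drop (Suc 23) allidx)" by code_simp
lemma chk_24: "list_all (pchk (allidx!24)) (drop (Suc 24) allidx)" by code_simp
lemma chk_25: "list_all (pchk (allidx!25)) (drop (Suc 25) allidx)" by code_simp
lemma chk_26: "list_all (pchk (allidx!26)) (drop (Suc 26) allidx)" by code_simp
lemma TLM_eq: "TLM = map tmask TL" by code_simp
lemma chkR1: "list_all (\<lambda>t. Zb (scross (pt (t!0)) (pt (t!1))) = tmask t) (take 40 TL)" by code_simp
lemma chkR2: "list_all (\<lambda>t. Zb (scross (pt (t!0)) (pt (t!1))) = tmask t) (drop 40 TL)" by code_simp
lemma chkTLM: "distinct TLM" by code_simp
lemma chk9: "list_all (\<lambda>k. length (filter (\<lambda>t. k \<in> set t) TL) = 9) allidx" by code_simp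
lemma chkPL: "list_all2 (\<lambda>t p. p < 81 \<and> list_all (\<lambda>x. x \<notin> set (TL!p)) t) TL PL" by code_simp
lemma chkTL: "length TL = 81 \<and> list_all (\<lambda>t. length t = 3 \<and> distinct t) TL" by code_simp
lemma chkall: "length allidx = 27 \<and> distinct allidx" by code_simp


section \<open>Projective basics\<close>

definition sm :: "complex \<Rightarrow> cvec \<Rightarrow> cvec" where "sm k v = (case v of (x,y,z) \<Rightarrow> (k*x,k*y,k*z))"

lemma ray_alt: "ray v = {sm k v | k. True}"
  by (cases v) (auto simp: ray_def sm_def)
lemma in_ray_self: "v \<in> ray v"
proof -
  have "v = sm 1 v" by (cases v) (simp add: sm_def)
  hence "v \<in> {sm k v | k. True}" by blast
  thus ?thesis by (simp add: ray_alt)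
qed
lemma sm_sm: "sm a (sm b v) = sm (a*b) v" by (cases v) (simp add: sm_def)
lemma ray_sm: assumes "k \<noteq> 0" shows "ray (sm k v) = ray v"
proof
  show "ray (sm k v) \<subseteq> ray v" by (auto simp: ray_alt sm_sm)
  show "ray v \<subseteq> ray (sm k v)"
  proof
    fix w assume "w \<in> ray v"
    then obtain a where w: "w = sm a v" by (auto simp: ray_alt)
    have "w = sm (a/k) (sm k v)" using assms w by (simp add: sm_sm)
    thus "w \<in> ray (sm k v)" by (auto simp: ray_alt)
  qed
qed
lemma ray_eqD: "ray v = ray w \<Longrightarrow> \<exists>k. w = sm k v"
  using in_ray_self[of w] unfolding ray_alt by auto

lemma pline_alt: "pline l = {ray v | v. v \<noteq> (0,0,0) \<and> cdot l v = 0}"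
  by (cases l) (auto simp: pline_def cdot_def)

lemma cdot_sm: "cdot l (sm k v) = k * cdot l v"
  by (cases l; cases v) (simp add: cdot_def sm_def algebra_simps)
lemma cdot_sml: "cdot (sm k l) v = k * cdot l v"
  by (cases l; cases v) (simp add: cdot_def sm_def algebra_simps)

lemma mem_pline: assumes "v \<noteq> (0,0,0)" shows "ray v \<in> pline l \<longleftrightarrow> cdot l v = 0"
proof
  assume "ray v \<in> pline l"
  then obtain u where u: "ray v = ray u" "cdot l u = 0" unfolding pline_alt by auto
  from ray_eqD[OF u(1)[symmetric]] obtain k where "v = sm k u" by auto
  thus "cdot l v = 0" using u(2) by (simp add: cdot_sm)
next
  assume "cdot l v = 0" thus "ray v \<in> pline l" using assms unfolding pline_alt by blast
qed

lemma pline_sml: assumes "k \<noteq> 0" shows "pline (sm k l) = pline l"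
  unfolding pline_alt using assms by (simp add: cdot_sml)

lemma cdot_cross1: "cdot (ccross u v) u = 0"
  by (cases u; cases v) (simp add: cdot_def ccross_def algebra_simps)
lemma cdot_cross2: "cdot (ccross u v) v = 0"
  by (cases u; cases v) (simp add: cdot_def ccross_def algebra_simps)

lemma cross_cross: "cdot l u = 0 \<Longrightarrow> cdot l v = 0 \<Longrightarrow> ccross l (ccross u v) = (0,0,0)"
proof -
  obtain a b c where l: "l = (a,b,c)" by (cases l) auto
  obtain x y z where u: "u = (x,y,z)" by (cases u) auto
  obtain p q r where v: "v = (p,q,r)" by (cases v) auto
  assume h1: "cdot l u = 0" and h2: "cdot l v = 0"
  have e1: "a*x + b*y + c*z = 0" and e2: "a*p+b*q+c*r = 0" using h1 h2 by (simp_all add: l u v cdot_def)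
  have "b * (x * q - y * p) - c * (z * p - x * r) = x * (a*p+b*q+c*r) - p * (a*x + b*y + c*z)" by algebra
  moreover have "c * (y * r - z * q) - a * (x * q - y * p) = y * (a*p+b*q+c*r) - q * (a*x + b*y + c*z)" by algebra
  moreover have "a * (z * p - x * r) - b * (y * r - z * q) = z * (a*p+b*q+c*r) - r * (a*x + b*y + c*z)" by algebra
  ultimately show ?thesis using e1 e2 by (simp add: l u v ccross_def)
qed

lemma par: assumes "ccross l m = (0,0,0)" "m \<noteq> (0,0,0)" shows "\<exists>k. l = sm k m"
proof -
  obtain a b c where l: "l = (a,b,c)" by (cases l) auto
  obtain x y z where m: "m = (x,y,z)" by (cases m) auto
  have e: "b*z = c*y" "c*x = a*z" "a*y = b*x" using assms(1) by (simp_all add: l m ccross_def)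
  consider "x \<noteq> 0" | "y \<noteq> 0" | "z \<noteq> 0" using assms(2) m by auto
  thus ?thesis
  proof cases
    case 1
    have "b = a/x*y" "c = a/x*z" using 1 e by (simp_all add: field_simps)
    hence "l = sm (a/x) m" using 1 unfolding l m sm_def by simp
    thus ?thesis by blast
  next
    case 2
    have "a = b/y*x" "c = b/y*z" using 2 e by (simp_all add: field_simps)
    hence "l = sm (b/y) m" using 2 unfolding l m sm_def by simp
    thus ?thesis by blast
  next
    case 3
    have "a = c/z*x" "b = c/z*y" using 3 e by (simp_all add: field_simps)
    hence "l = sm (c/z) m" using 3 unfolding l m sm_def by simp
    thus ?thesis by blast
  qed
qed

lemma two_pt:
  assumes "l \<noteq> (0,0,0)" "cdot l u = 0" "cdot l v = 0" "ccross u v \<noteq> (0,0,0)"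
  shows "\<exists>k. k \<noteq> 0 \<and> l = sm k (ccross u v)"
proof -
  obtain k where k: "l = sm k (ccross u v)" using par[OF cross_cross[OF assms(2,3)] assms(4)] by blast
  have "k \<noteq> 0" using assms(1) k by (cases "ccross u v") (auto simp: sm_def)
  thus ?thesis using k by blast
qed

section \<open>The points\<close>

definition Pv :: "idx \<Rightarrow> cvec" where "Pv i = evv (pt i)"

lemma Pv_simps:
  "Pv (Z0,a,b) = (1, evz a, - cc * evz b)"
  "Pv (Z1,a,b) = (- cc * evz b, 1, evz a)"
  "Pv (Z2,a,b) = (evz a, - cc * evz b, 1)"
  by (simp_all add: Pv_def)

lemma Pv_nz: "Pv i \<noteq> (0,0,0)"
proof -
  obtain t a b where i: "i = (t,a,b)" by (cases i) auto
  show ?thesis unfolding i by (cases t) (simp_all add: Pv_simps)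
qed

lemma evz3: "evz a ^ 3 = 1"
proof -
  have "(om^2)^3 = (om^3)^2" by algebra
  thus ?thesis by (cases a) (simp_all add: om3)
qed

lemma UNIV_idx: "(UNIV :: idx set) = set allidx"
proof -
  { fix t a b :: z3 have "(t,a,b) \<in> set allidx" by (cases t; cases a; cases b) (simp_all add: allidx_def) }
  thus ?thesis by auto
qed
lemma finite_idx[simp]: "finite (A :: idx set)"
  using UNIV_idx by (metis finite_set finite_subset subset_UNIV)
lemma card_idx: "card (UNIV :: idx set) = 27"
  using chkall UNIV_idx distinct_card by metis

lemma cc_nz: "cc \<noteq> 0" using cc3 by auto

lemma root1: assumes "w^3 = 1" shows "\<exists>a. w = evz a"
  using cube_root_unity[OF assms] by (metis evz.simps)

lemma param1: assumes "u \<noteq> 0" "v^3 = u^3" shows "\<exists>a. v = u * evz a"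
proof -
  have "(v/u)^3 = 1" using assms by (simp add: power_divide)
  then obtain a where "v/u = evz a" using root1 by blast
  hence "v = u * evz a" using assms(1) by (simp add: field_simps)
  thus ?thesis by blast
qed
lemma param2: assumes "u \<noteq> 0" "v^3 = -2 * u^3" shows "\<exists>b. v = u * (- cc * evz b)"
proof -
  have "(- cc * u)^3 = -2 * u^3" by (simp add: power_mult_distrib cc3)
  hence "v^3 = (- cc * u)^3" using assms by simp
  then obtain b where "v = (- cc * u) * evz b" using param1[of "- cc * u" v] assms(1) cc_nz by auto
  thus ?thesis by (metis mult.assoc mult.commute)
qed

lemma Pv_on: assumes "Pv i = (x,y,z)" shows "x^3 + y^3 + z^3 = 0 \<and> (x^3 - y^3) * (y^3 - z^3) * (z^3 - x^3) = 0"
proof -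
  obtain t a b where i: "i = (t,a,b)" by (cases i) auto
  have m: "(cc * evz b)^3 = 2" by (simp add: power_mult_distrib evz3 cc3)
  show ?thesis using assms unfolding i by (cases t) (auto simp: Pv_simps m evz3)
qed

lemma S_eq: "sextactic_pts = (\<lambda>i. ray (Pv i)) ` UNIV"
proof
  show "(\<lambda>i. ray (Pv i)) ` UNIV \<subseteq> sextactic_pts"
  proof clarify
    fix i
    obtain x y z where e: "Pv i = (x,y,z)" by (cases "Pv i") auto
    show "ray (Pv i) \<in> sextactic_pts" unfolding sextactic_pts_def
      using Pv_on[OF e] Pv_nz[of i] e by auto
  qed
next
  show "sextactic_pts \<subseteq> (\<lambda>i. ray (Pv i)) ` UNIV"
  proof
    fix p assume "p \<in> sextactic_pts"
    then obtain x y z where p: "p = ray (x,y,z)" and nz: "(x,y,z) \<noteq> (0,0,0)"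
      and f: "x^3 + y^3 + z^3 = 0" and g: "(x^3 - y^3) * (y^3 - z^3) * (z^3 - x^3) = 0"
      unfolding sextactic_pts_def by auto
    from g consider "x^3 = y^3" | "y^3 = z^3" | "z^3 = x^3" by auto
    thus "p \<in> (\<lambda>i. ray (Pv i)) ` UNIV"
    proof cases
      case 1
      have z: "z^3 = -2 * x^3" using f 1 by (simp add: algebra_simps eq_neg_iff_add_eq_0)
      have "x \<noteq> 0" using nz 1 z by auto
      obtain a where a: "y = x * evz a" using param1[OF \<open>x\<noteq>0\<close>] 1 by metis
      obtain b where b: "z = x * (- cc * evz b)" using param2[OF \<open>x\<noteq>0\<close> z] by metis
      have "(x,y,z) = sm x (Pv (Z0,a,b))" by (simp add: sm_def Pv_simps a b)
      hence "p = ray (Pv (Z0,a,b))" using p ray_sm[OF \<open>x\<noteq>0\<close>] by simp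
      thus ?thesis by blast
    next
      case 2
      have z: "x^3 = -2 * y^3" using f 2 by (simp add: algebra_simps eq_neg_iff_add_eq_0)
      have "y \<noteq> 0" using nz 2 z by auto
      obtain a where a: "z = y * evz a" using param1[OF \<open>y\<noteq>0\<close>] 2 by metis
      obtain b where b: "x = y * (- cc * evz b)" using param2[OF \<open>y\<noteq>0\<close> z] by metis
      have "(x,y,z) = sm y (Pv (Z1,a,b))" by (simp add: sm_def Pv_simps a b)
      hence "p = ray (Pv (Z1,a,b))" using p ray_sm[OF \<open>y\<noteq>0\<close>] by simp
      thus ?thesis by blast
    next
      case 3
      have z: "y^3 = -2 * z^3" using f 3 by (simp add: algebra_simps eq_neg_iff_add_eq_0)
      have "z \<noteq> 0" using nz 3 z by auto
      obtain a where a: "x = z * evz a" using param1[OF \<open>z\<noteq>0\<close>] 3 by metis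
      obtain b where b: "y = z * (- cc * evz b)" using param2[OF \<open>z\<noteq>0\<close> z] by metis
      have "(x,y,z) = sm z (Pv (Z2,a,b))" by (simp add: sm_def Pv_simps a b)
      hence "p = ray (Pv (Z2,a,b))" using p ray_sm[OF \<open>z\<noteq>0\<close>] by simp
      thus ?thesis by blast
    qed
  qed
qed



definition Z :: "cvec \<Rightarrow> idx set" where "Z l = {i. cdot l (Pv i) = 0}"
definition R :: "idx \<Rightarrow> cvec set" where "R i = ray (Pv i)"

lemma Z_sm: "k \<noteq> 0 \<Longrightarrow> Z (sm k l) = Z l" by (simp add: Z_def cdot_sml)
lemma Z_pline: "i \<in> Z l \<longleftrightarrow> R i \<in> pline l"
  by (simp add: Z_def R_def mem_pline[OF Pv_nz])
lemma Z_eq_pline: "Z l = {i. R i \<in> pline l}" using Z_pline by blast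
lemma S_R: "sextactic_pts = range R" using S_eq by (simp add: R_def[abs_def])
lemma line_S: "pline l \<inter> sextactic_pts = R ` Z l"
  unfolding S_R using Z_pline by blast

lemma Zb_tmask: assumes "Zb (scross (pt i) (pt j)) = tmask zs"
  shows "Z (ccross (Pv i) (Pv j)) = set zs"
proof -
  have "\<forall>k\<in>set allidx. iszero (sdot (scross (pt i) (pt j)) (pt k)) = (k \<in> set zs)"
    using assms unfolding Zb_def tmask_def map_eq_conv .
  hence "\<forall>k. (cdot (ccross (Pv i) (Pv j)) (Pv k) = 0) = (k \<in> set zs)"
    using UNIV_idx by (auto simp: iszero_iff evs_sdot evv_scross Pv_def)
  thus ?thesis by (auto simp: Z_def)
qed

lemma pchk_Z: assumes "pchk i j"
  shows "Z (ccross (Pv i) (Pv j)) = {i,j} \<or> (\<exists>t\<in>set TL. Z (ccross (Pv i) (Pv j)) = set t)"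
proof -
  from assms have "Zb (scross (pt i) (pt j)) = tmask [i,j] \<or> (\<exists>t\<in>set TL. Zb (scross (pt i) (pt j)) = tmask t)"
    unfolding pchk_def pchk2_def TLM_eq by auto
  thus ?thesis using Zb_tmask by (metis empty_set list.simps(15))
qed

lemma pairs_cover:
  assumes "\<forall>k<length xs. list_all (P (xs!k)) (drop (Suc k) xs)" "i \<in> set xs" "j \<in> set xs" "i \<noteq> j"
  shows "P i j \<or> P j i"
proof -
  obtain a where a: "a < length xs" "xs!a = i" using assms(2) by (auto simp: in_set_conv_nth)
  obtain b where b: "b < length xs" "xs!b = j" using assms(3) by (auto simp: in_set_conv_nth)
  have "a \<noteq> b" using a b assms(4) by auto
  { fix a b x y assume a: "a < length xs" "xs!a = x" and b: "b < length xs" "xs!b = y" and ab: "a < b"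
    have "drop (Suc a) xs ! (b - Suc a) = xs ! b" using ab b by simp
    hence "y \<in> set (drop (Suc a) xs)" using ab b by (metis length_drop diff_less_mono nth_mem Suc_leI)
    hence "P x y" using assms(1) a by (auto simp: list_all_iff)
  }
  thus ?thesis using a b \<open>a \<noteq> b\<close> by (metis linorder_neq_iff)
qed

lemma chk_all: "\<forall>k<length allidx. list_all (pchk (allidx!k)) (drop (Suc k) allidx)"
proof (intro allI impI)
  fix k assume "k < length allidx"
  hence "k < 27" using chkall by simp
  hence "k = 0 \<or> k = 1 \<or> k = 2 \<or> k = 3 \<or> k = 4 \<or> k = 5 \<or> k = 6 \<or> k = 7 \<or> k = 8 \<or> k = 9 \<or>
    k = 10 \<or> k = 11 \<or> k = 12 \<or> k = 13 \<or> k = 14 \<or> k = 15 \<or> k = 16 \<or> k = 17 \<or> k = 18 \<or> k = 19 \<or>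
    k = 20 \<or> k = 21 \<or> k = 22 \<or> k = 23 \<or> k = 24 \<or> k = 25 \<or> k = 26" by presburger
  thus "list_all (pchk (allidx!k)) (drop (Suc k) allidx)"
    using chk_0 chk_1 chk_2 chk_3 chk_4 chk_5 chk_6 chk_7 chk_8 chk_9 chk_10 chk_11 chk_12 chk_13
      chk_14 chk_15 chk_16 chk_17 chk_18 chk_19 chk_20 chk_21 chk_22 chk_23 chk_24 chk_25 chk_26
    by (elim disjE; simp only:)
qed

lemma cross_swap: "ccross v u = sm (-1) (ccross u v)"
  by (cases u; cases v) (simp add: ccross_def sm_def)

lemma PZ: assumes "i \<noteq> j"
  shows "Z (ccross (Pv i) (Pv j)) = {i,j} \<or> (\<exists>t\<in>set TL. Z (ccross (Pv i) (Pv j)) = set t)"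
proof -
  have "pchk i j \<or> pchk j i" using pairs_cover[OF chk_all] assms UNIV_idx by blast
  moreover have "Z (ccross (Pv j) (Pv i)) = Z (ccross (Pv i) (Pv j))"
    using cross_swap Z_sm by (metis neg_equal_0_iff_equal zero_neq_one)
  ultimately show ?thesis using pchk_Z by (metis insert_commute)
qed

lemma TL_props: "t \<in> set TL \<Longrightarrow> length t = 3 \<and> distinct t"
  using chkTL by (auto simp: list_all_iff)
lemma TL_card: "t \<in> set TL \<Longrightarrow> card (set t) = 3"
  using TL_props distinct_card by metis

lemma Z_zero: "Z (0,0,0) = UNIV" by (auto simp: Z_def cdot_def split: prod.splits)

lemma cross_nz: assumes "i \<noteq> j" shows "ccross (Pv i) (Pv j) \<noteq> (0,0,0)"
proof
  assume h: "ccross (Pv i) (Pv j) = (0,0,0)"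
  from PZ[OF assms] consider "Z (ccross (Pv i) (Pv j)) = {i,j}" | t where "t \<in> set TL" "Z (ccross (Pv i) (Pv j)) = set t" by blast
  hence "card (Z (ccross (Pv i) (Pv j))) \<le> 3"
  proof cases
    case 1 thus ?thesis by (simp add: card_insert_if)
  next
    case 2 thus ?thesis using TL_card by simp
  qed
  thus False using h Z_zero card_idx by simp
qed

lemma cross_self_sm: "ccross v (sm k v) = (0,0,0)"
  by (cases v) (simp add: ccross_def sm_def algebra_simps)

lemma inj_R: "inj R"
proof
  fix i j assume "R i = R j"
  then obtain k where "Pv j = sm k (Pv i)" using ray_eqD unfolding R_def by blast
  hence "ccross (Pv i) (Pv j) = (0,0,0)" by (simp add: cross_self_sm)
  thus "i = j" using cross_nz by blast
qed

definition lineOf :: "idx list \<Rightarrow> cvec" where "lineOf t = ccross (Pv (t!0)) (Pv (t!1))"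

lemma lineOf_Z: assumes "t \<in> set TL" shows "Z (lineOf t) = set t"
proof -
  have "t \<in> set (take 40 TL) \<or> t \<in> set (drop 40 TL)" using assms
    by (metis Un_iff append_take_drop_id set_append)
  hence "Zb (scross (pt (t!0)) (pt (t!1))) = tmask t" using chkR1 chkR2 by (auto simp: list_all_iff)
  thus ?thesis unfolding lineOf_def by (rule Zb_tmask)
qed

lemma TL_01: assumes "t \<in> set TL" shows "t!0 \<noteq> t!1" "t!0 \<in> set t" "t!1 \<in> set t"
  using TL_props[OF assms] by (auto simp: nth_eq_iff_index_eq)

lemma lineOf_nz: "t \<in> set TL \<Longrightarrow> lineOf t \<noteq> (0,0,0)"
  unfolding lineOf_def using TL_01 cross_nz by blast

lemma three_elems: assumes "3 \<le> card A" obtains i j k where "i \<in> A" "j \<in> A" "k \<in> A" "i \<noteq> j" "i \<noteq> k" "j \<noteq> k"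
proof -
  obtain B where "B \<subseteq> A" "card B = 3" using obtain_subset_with_card_n[OF assms] by metis
  then obtain x y z where "B = {x,y,z}" "x \<noteq> y" "y \<noteq> z" "x \<noteq> z" by (auto simp: card_3_iff)
  thus ?thesis using that \<open>B \<subseteq> A\<close> by blast
qed

lemma M1: assumes "l \<noteq> (0,0,0)" "3 \<le> card (Z l)"
  shows "\<exists>t\<in>set TL. Z l = set t \<and> pline l = pline (lineOf t)"
proof -
  obtain i j k where ijk: "i \<in> Z l" "j \<in> Z l" "k \<in> Z l" "i \<noteq> j" "i \<noteq> k" "j \<noteq> k"
    using three_elems[OF assms(2)] by metis
  define m where "m = ccross (Pv i) (Pv j)"
  have mnz: "m \<noteq> (0,0,0)" unfolding m_def using cross_nz ijk by blast
  obtain \<kappa> where \<kappa>: "\<kappa> \<noteq> 0" "l = sm \<kappa> m"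
    using two_pt[OF assms(1)] ijk mnz unfolding m_def Z_def by blast
  have Zlm: "Z l = Z m" using \<kappa> Z_sm by simp
  have plm: "pline l = pline m" using \<kappa> pline_sml by simp
  from PZ[OF ijk(4)] obtain t where t: "t \<in> set TL" "Z m = set t"
    using ijk Zlm unfolding m_def by auto
  have "i \<in> Z (lineOf t)" "j \<in> Z (lineOf t)" using lineOf_Z[OF t(1)] t(2) ijk Zlm by auto
  then obtain \<kappa>' where "\<kappa>' \<noteq> 0" "lineOf t = sm \<kappa>' m"
    using two_pt[OF lineOf_nz[OF t(1)]] mnz unfolding m_def Z_def by blast
  hence "pline (lineOf t) = pline m" using pline_sml by simp
  thus ?thesis using t Zlm plm by auto
qed

lemma card_LS: "card (pline l \<inter> sextactic_pts) = card (Z l)"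
  unfolding line_S using inj_R by (simp add: card_image inj_on_subset)

lemma card_le3: assumes "l \<noteq> (0,0,0)" shows "card (Z l) \<le> 3"
proof (rule ccontr)
  assume "\<not> card (Z l) \<le> 3"
  then obtain t where "t \<in> set TL" "Z l = set t" using M1[OF assms] by force
  thus False using TL_card \<open>\<not> card (Z l) \<le> 3\<close> by simp
qed

definition RL :: "idx list \<Rightarrow> cvec set set" where "RL t = pline (lineOf t)"

lemma RL_card: "t \<in> set TL \<Longrightarrow> card (RL t \<inter> sextactic_pts) = 3"
  unfolding RL_def card_LS using lineOf_Z TL_card by simp

lemma plines_E: "L \<in> plines \<Longrightarrow> \<exists>l. l \<noteq> (0,0,0) \<and> L = pline l"
  unfolding plines_def by auto

lemma RL_plines: "t \<in> set TL \<Longrightarrow> RL t \<in> plines"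
  unfolding plines_def RL_def using lineOf_nz by blast

lemma rich_eq: "rich_lines = RL ` set TL"
proof
  show "rich_lines \<subseteq> RL ` set TL"
  proof
    fix L assume "L \<in> rich_lines"
    hence L: "L \<in> plines" "3 \<le> card (L \<inter> sextactic_pts)" unfolding rich_lines_def by auto
    then obtain l where l: "l \<noteq> (0,0,0)" "L = pline l" using plines_E by blast
    have "3 \<le> card (Z l)" using L(2) l card_LS by simp
    then obtain t where "t \<in> set TL" "pline l = pline (lineOf t)" using M1[OF l(1)] by blast
    thus "L \<in> RL ` set TL" using l unfolding RL_def by blast
  qed
  show "RL ` set TL \<subseteq> rich_lines"
    unfolding rich_lines_def using RL_plines RL_card by auto
qed

lemma Z_RL: "t \<in> set TL \<Longrightarrow> {i. R i \<in> RL t} = set t"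
  unfolding RL_def using lineOf_Z Z_eq_pline by simp

lemma inj_tmask: "inj_on tmask (set TL)"
  using chkTLM unfolding TLM_eq by (simp add: distinct_map)

lemma tmask_set: "set t = set u \<Longrightarrow> tmask t = tmask u" by (simp add: tmask_def)

lemma inj_RL: "inj_on RL (set TL)"
proof
  fix t u assume tu: "t \<in> set TL" "u \<in> set TL" "RL t = RL u"
  hence "set t = set u" using Z_RL by metis
  thus "t = u" using inj_tmask tu tmask_set by (metis inj_onD)
qed

lemma distinct_TL: "distinct TL"
  using chkTLM unfolding TLM_eq by (simp add: distinct_map)

lemma card_rich: "card rich_lines = 81"
  using rich_eq inj_RL card_image distinct_card[OF distinct_TL] chkTL by metis

lemma per_point: assumes "p \<in> sextactic_pts" shows "card {L \<in> rich_lines. p \<in> L} = 9"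
proof -
  obtain k where p: "p = R k" using assms S_R by blast
  have "{L \<in> rich_lines. p \<in> L} = RL ` {t \<in> set TL. k \<in> set t}"
    unfolding rich_eq p using Z_RL by auto
  hence "card {L \<in> rich_lines. p \<in> L} = card {t \<in> set TL. k \<in> set t}"
    using inj_RL by (simp add: card_image inj_on_subset)
  also have "\<dots> = length (filter (\<lambda>t. k \<in> set t) TL)"
    by (metis distinct_card distinct_filter distinct_TL set_filter)
  also have "\<dots> = 9" using chk9 UNIV_idx unfolding list_all_iff by (metis UNIV_I)
  finally show ?thesis .
qed

lemma partner: assumes "t \<in> set TL" shows "\<exists>u\<in>set TL. set t \<inter> set u = {}"
proof -
  obtain n where n: "n < length TL" "TL!n = t" using assms by (auto simp: in_set_conv_nth)
  have "PL!n < 81 \<and> list_all (\<lambda>x. x \<notin> set (TL!(PL!n))) (TL!n)"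
    using chkPL n(1) by (simp add: list_all2_conv_all_nth)
  thus ?thesis using n chkTL by (auto simp: list_all_iff)
qed

lemma le3_all: "L \<in> plines \<Longrightarrow> card (L \<inter> sextactic_pts) \<le> 3"
  using plines_E card_LS card_le3 by metis

theorem main_all:
  shows "rich_lines = {L \<in> plines. \<exists>L' \<in> plines. card ((L \<union> L') \<inter> sextactic_pts) \<ge> 6}
    \<and> card rich_lines = 81
    \<and> (\<forall>L \<in> rich_lines. card (L \<inter> sextactic_pts) = 3)
    \<and> (\<forall>p \<in> sextactic_pts. card {L \<in> rich_lines. p \<in> L} = 9)"
proof (intro conjI)
  show "card rich_lines = 81" by (rule card_rich)
  show "\<forall>L \<in> rich_lines. card (L \<inter> sextactic_pts) = 3" unfolding rich_eq using RL_card by blast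
  show "\<forall>p \<in> sextactic_pts. card {L \<in> rich_lines. p \<in> L} = 9" using per_point by blast
  show "rich_lines = {L \<in> plines. \<exists>L' \<in> plines. card ((L \<union> L') \<inter> sextactic_pts) \<ge> 6}"
  proof
    show "rich_lines \<subseteq> {L \<in> plines. \<exists>L' \<in> plines. card ((L \<union> L') \<inter> sextactic_pts) \<ge> 6}"
    proof
      fix L assume "L \<in> rich_lines"
      then obtain t where t: "t \<in> set TL" "L = RL t" using rich_eq by auto
      obtain u where u: "u \<in> set TL" "set t \<inter> set u = {}" using partner[OF t(1)] by blast
      have "(L \<union> RL u) \<inter> sextactic_pts = R ` (set t \<union> set u)"
        using t(2) line_S lineOf_Z[OF t(1)] lineOf_Z[OF u(1)] unfolding RL_def by (simp add: Int_Un_distrib2 image_Un)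
      hence "card ((L \<union> RL u) \<inter> sextactic_pts) = card (set t \<union> set u)"
        using inj_R by (simp add: card_image inj_on_subset)
      also have "\<dots> = 6" using u TL_card t(1) by (simp add: card_Un_disjoint)
      finally show "L \<in> {L \<in> plines. \<exists>L' \<in> plines. card ((L \<union> L') \<inter> sextactic_pts) \<ge> 6}"
        using t RL_plines[OF t(1)] RL_plines[OF u(1)] by (metis (no_types, lifting) mem_Collect_eq order_refl)
    qed
    show "{L \<in> plines. \<exists>L' \<in> plines. card ((L \<union> L') \<inter> sextactic_pts) \<ge> 6} \<subseteq> rich_lines"
    proof clarify
      fix L L' assume h: "L \<in> plines" "L' \<in> plines" "6 \<le> card ((L \<union> L') \<inter> sextactic_pts)"
      have "card ((L \<union> L') \<inter> sextactic_pts) \<le> card (L \<inter> sextactic_pts) + card (L' \<inter> sextactic_pts)"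
        by (simp add: Int_Un_distrib2 card_Un_le)
      hence "3 \<le> card (L \<inter> sextactic_pts)" using h le3_all[OF h(2)] by linarith
      thus "L \<in> rich_lines" unfolding rich_lines_def using h by auto
    qed
  qed
qed


theorem mainTheorem8:
  shows "rich_lines = {L \<in> plines. \<exists>L' \<in> plines. card ((L \<union> L') \<inter> sextactic_pts) \<ge> 6}
    \<and> card rich_lines = 81
    \<and> (\<forall>L \<in> rich_lines. card (L \<inter> sextactic_pts) = 3)
    \<and> (\<forall>p \<in> sextactic_pts. card {L \<in> rich_lines. p \<in> L} = 9)"
  by (rule main_all)

end
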